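(* Let $k=\delta n$ with $\delta = \omega(\log^{-1/3} n)$, let $G=(X\dot\cup Y,E)$ be a $k$-regular bipartite graph on $2n$ vertices, and let $(S,T)$ be a cut of $G$. Let $G_1, G_2, G_H$ be as in the context, and let $V_{low}$ be the set of vertices $x\in V\setminus\Gamma(S,T)$ with $\deg^{\mathrm{Par}}_{G_1}(x)\le \frac{1}{1000}\log n$. W.v.h.p. the following hold: (1) $|V_{low}|\le n^{0.01}$; (2) for any two distinct $x,y\in V_{low}$, the distance between $x$ and $y$ in $G_H$ is at least $6$.
   Context: $V=X\cup Y$. A cut is a pair $(S,T)$ with $S\subseteq X$, $T\subseteq Y$; cross edges w.r.t. $(S,T)$ are edges joining $S$ to $Y\setminus T$ or $X\setminus S$ to $T$, and all other edges are parallel. $\deg^{\mathrm{Cr}}_H(x)$ and $\deg^{\mathrm{Par}}_H(x)$ denote the number of cross, respectively parallel, edges of a subgraph $H$ incident to $x$. $\Gamma(S,T)=\{x\in V:\deg^{\mathrm{Cr}}_G(x)\ge n^{-1/20}k\}$. Set $p_1 = \frac{\log n - \log\log\log\log n}{k}$, $p_2 = \frac{\log n + \log\log\log\log n}{k}$; for a graph $H$, $H(p)$ retains each edge independently with probability $p$. Let $G_2\sim G(p_2)$ and $G_1\sim G_2(p_1/p_2)$. $G_H$ is obtained from $G_1$ by adding, for each isolated vertex $v$ of $G_1$, an edge chosen uniformly at random from $\{e\in E(G_2):v\in e\}$; if any such set is empty, or two vertices isolated in $G_1$ are adjacent in $G_2$, set $G_H=G_1$. A sequence of events $A_n$ holds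 with very high probability (w.v.h.p.) if $\log(\mathbb P[A_n^c])=-\Omega(\log n)$. *)

theory Defs
  imports "HOL-Probability.Probability" "HOL-Library.Extended_Nat"
begin

text \<open>Bipartite graphs with sides X, Y; an edge is a pair (x, y) with x in X and y in Y.
  A subgraph is a subset of the edge set.\<close>

definition inc :: "('a \<times> 'a) set \<Rightarrow> 'a \<Rightarrow> ('a \<times> 'a) set" where
  "inc H v = {e \<in> H. fst e = v \<or> snd e = v}"

definition adj :: "('a \<times> 'a) set \<Rightarrow> 'a \<Rightarrow> 'a \<Rightarrow> bool" where
  "adj H u v \<longleftrightarrow> (u, v) \<in> H \<or> (v, u) \<in> H"

definition bip_regular :: "'a set \<Rightarrow> 'a set \<Rightarrow> ('a \<times> 'a) set \<Rightarrow> nat \<Rightarrow> nat \<Rightarrow> bool" where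
  "bip_regular X Y E n k \<longleftrightarrow> finite X \<and> finite Y \<and> X \<inter> Y = {} \<and> card X = n \<and> card Y = n
     \<and> E \<subseteq> X \<times> Y \<and> (\<forall>v \<in> X \<union> Y. card (inc E v) = k)"

definition is_cut :: "'a set \<Rightarrow> 'a set \<Rightarrow> 'a set \<Rightarrow> 'a set \<Rightarrow> bool" where
  "is_cut X Y S T \<longleftrightarrow> S \<subseteq> X \<and> T \<subseteq> Y"

text \<open>Cross edges w.r.t. (S,T): join S to Y - T, or X - S to T (edges go from X to Y).\<close>
definition is_cross :: "'a set \<Rightarrow> 'a set \<Rightarrow> 'a \<times> 'a \<Rightarrow> bool" where
  "is_cross S T e \<longleftrightarrow> (fst e \<in> S \<and> snd e \<notin> T) \<or> (fst e \<notin> S \<and> snd e \<in> T)"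

definition deg_cr :: "'a set \<Rightarrow> 'a set \<Rightarrow> ('a \<times> 'a) set \<Rightarrow> 'a \<Rightarrow> nat" where
  "deg_cr S T H v = card {e \<in> inc H v. is_cross S T e}"

definition deg_par :: "'a set \<Rightarrow> 'a set \<Rightarrow> ('a \<times> 'a) set \<Rightarrow> 'a \<Rightarrow> nat" where
  "deg_par S T H v = card {e \<in> inc H v. \<not> is_cross S T e}"

definition Gamma :: "'a set \<Rightarrow> 'a set \<Rightarrow> ('a \<times> 'a) set \<Rightarrow> 'a set \<Rightarrow> 'a set \<Rightarrow> nat \<Rightarrow> nat \<Rightarrow> 'a set" where
  "Gamma X Y E S T n k = {x \<in> X \<union> Y. real (deg_cr S T E x) \<ge> real n powr (-1/20) * real k}"

definition Vlow :: "'a set \<Rightarrow> 'a set \<Rightarrow> ('a \<times> 'a) set \<Rightarrow> 'a set \<Rightarrow> 'a set \<Rightarrow> nat \<Rightarrow> nat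
    \<Rightarrow> ('a \<times> 'a) set \<Rightarrow> 'a set" where
  "Vlow X Y E S T n k G1 = {x \<in> (X \<union> Y) - Gamma X Y E S T n k.
      real (deg_par S T G1 x) \<le> ln (real n) / 1000}"

definition p1 :: "nat \<Rightarrow> nat \<Rightarrow> real" where
  "p1 n k = (ln (real n) - ln (ln (ln (ln (real n))))) / real k"

definition p2 :: "nat \<Rightarrow> nat \<Rightarrow> real" where
  "p2 n k = (ln (real n) + ln (ln (ln (ln (real n))))) / real k"

text \<open>Walks (as vertex lists) and graph distance (infinite if no walk exists).\<close>
fun walk :: "('a \<times> 'a) set \<Rightarrow> 'a list \<Rightarrow> bool" where
  "walk H [] = False"
| "walk H [v] = True"
| "walk H (u # v # vs) \<longleftrightarrow> adj H u v \<and> walk H (v # vs)"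

definition gdist :: "('a \<times> 'a) set \<Rightarrow> 'a \<Rightarrow> 'a \<Rightarrow> enat" where
  "gdist H x y = (INF xs \<in> {xs. walk H xs \<and> hd xs = x \<and> last xs = y}. enat (length xs - 1))"

definition random_graphs :: "'a set \<Rightarrow> ('a \<times> 'a) set \<Rightarrow> real \<Rightarrow> real
    \<Rightarrow> (('a \<times> 'a) set \<times> ('a \<times> 'a) set \<times> ('a \<times> 'a) set) pmf" where
  "random_graphs V E q1 q2 =
    bind_pmf (Pi_pmf E False (\<lambda>_. bernoulli_pmf q2)) (\<lambda>f.
    let G2 = {e \<in> E. f e} in
    bind_pmf (Pi_pmf G2 False (\<lambda>_. bernoulli_pmf (q1 / q2))) (\<lambda>g.
    let G1 = {e \<in> G2. g e};
        I = {v \<in> V. inc G1 v = {}} in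
    if (\<exists>v \<in> I. inc G2 v = {}) \<or> (\<exists>u \<in> I. \<exists>v \<in> I. adj G2 u v)
    then return_pmf (G1, G2, G1)
    else bind_pmf (Pi_pmf I undefined (\<lambda>v. pmf_of_set (inc G2 v))) (\<lambda>c.
         return_pmf (G1, G2, G1 \<union> c ` I))))"

end

theory Submission
  imports Defs "HOL-Real_Asymp.Real_Asymp"
begin



definition Qd :: "'e set \<Rightarrow> real \<Rightarrow> real \<Rightarrow> ('e \<Rightarrow> bool \<times> bool) pmf" where
  "Qd E q2 r = Pi_pmf E (False, False) (\<lambda>_. pair_pmf (bernoulli_pmf q2) (bernoulli_pmf r))"

lemma prob_le_integral:
  fixes Q :: "'b pmf" and h :: "'b \<Rightarrow> real"
  assumes fin: "finite (set_pmf Q)"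
    and ge1: "\<And>x. x \<in> set_pmf Q \<Longrightarrow> x \<in> A \<Longrightarrow> 1 \<le> h x"
    and nn: "\<And>x. x \<in> set_pmf Q \<Longrightarrow> 0 \<le> h x"
  shows "measure_pmf.prob Q A \<le> measure_pmf.expectation Q h"
proof -
  have "measure_pmf.prob Q A = measure_pmf.expectation Q (indicator A)"
    by simp
  also have "\<dots> \<le> measure_pmf.expectation Q h"
    by (intro integral_mono_AE integrable_measure_pmf_finite fin AE_pmfI)
       (auto split: split_indicator simp: ge1 nn)
  finally show ?thesis .
qed

lemma finite_Qd: "finite E \<Longrightarrow> finite (set_pmf (Qd E q2 r))"
  unfolding Qd_def by (subst set_Pi_pmf) (auto intro!: finite_PiE_dflt)

lemma Qd_prod:
  fixes F :: "'e \<Rightarrow> bool \<Rightarrow> bool \<Rightarrow> real"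
  assumes "finite E" "0 \<le> q2" "q2 \<le> 1" "0 \<le> r" "r \<le> 1" "\<And>e u v. 0 \<le> F e u v"
  shows "measure_pmf.expectation (Qd E q2 r) (\<lambda>h. \<Prod>e\<in>E. F e (fst (h e)) (snd (h e))) =
    (\<Prod>e\<in>E. F e True True * q2 * r + F e True False * q2 * (1-r)
             + F e False True * (1-q2) * r + F e False False * (1-q2) * (1-r))"
proof -
  have "measure_pmf.expectation (Qd E q2 r) (\<lambda>h. \<Prod>e\<in>E. F e (fst (h e)) (snd (h e))) =
     (\<Prod>e\<in>E. measure_pmf.expectation (pair_pmf (bernoulli_pmf q2) (bernoulli_pmf r)) (\<lambda>z. F e (fst z) (snd z)))"
    unfolding Qd_def
    by (rule expectation_prod_Pi_pmf[where f = "\<lambda>e z. F e (fst z) (snd z)"])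
       (auto intro!: integrable_measure_pmf_finite assms)
  also have "\<dots> = (\<Prod>e\<in>E. F e True True * q2 * r + F e True False * q2 * (1-r)
             + F e False True * (1-q2) * r + F e False False * (1-q2) * (1-r))"
  proof (intro prod.cong refl)
    fix e
    show "measure_pmf.expectation (pair_pmf (bernoulli_pmf q2) (bernoulli_pmf r)) (\<lambda>z. F e (fst z) (snd z)) =
      F e True True * q2 * r + F e True False * q2 * (1-r)
             + F e False True * (1-q2) * r + F e False False * (1-q2) * (1-r)"
      by (subst integral_measure_pmf_real[where A="{(True,True),(True,False),(False,True),(False,False)}"])
         (auto simp: pmf_pair assms algebra_simps)
  qed
  finally show ?thesis .
qed

lemma L_gen:
  fixes t a q2 r :: real
  assumes E: "finite E" and PE: "P \<subseteq> E" and AE: "A \<subseteq> E" and PA: "P \<inter> A = {}"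
    and t: "0 < t" "t < 1" and q: "0 \<le> q2" "q2 \<le> 1" "0 \<le> r" "r \<le> 1"
  shows "measure_pmf.prob (Qd E q2 r) {h. P \<subseteq> {e\<in>E. fst (h e)} \<and>
            real (card {e\<in>A. fst (h e) \<and> snd (h e)}) \<le> a}
         \<le> t powr (-a) * q2 ^ card P * (1 - q2 * r * (1 - t)) ^ card A"
proof -
  define F where "F = (\<lambda>e u v. (if e \<in> P then (if u then 1 else 0) else 1) *
                              (if e \<in> A \<and> u \<and> v then t else (1::real)))"
  have Fnn: "0 \<le> F e u v" for e u v using t by (auto simp: F_def)
  have "measure_pmf.prob (Qd E q2 r) {h. P \<subseteq> {e\<in>E. fst (h e)} \<and>
            real (card {e\<in>A. fst (h e) \<and> snd (h e)}) \<le> a}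
        \<le> measure_pmf.expectation (Qd E q2 r) (\<lambda>h. t powr (-a) * (\<Prod>e\<in>E. F e (fst (h e)) (snd (h e))))"
  proof (rule prob_le_integral[OF finite_Qd[OF E]])
    fix h :: "'a \<Rightarrow> bool \<times> bool"
    show "0 \<le> t powr (-a) * (\<Prod>e\<in>E. F e (fst (h e)) (snd (h e)))"
      by (intro mult_nonneg_nonneg prod_nonneg) (auto simp: Fnn)
    assume "h \<in> {h. P \<subseteq> {e\<in>E. fst (h e)} \<and> real (card {e\<in>A. fst (h e) \<and> snd (h e)}) \<le> a}"
    then have hP: "\<And>e. e \<in> P \<Longrightarrow> fst (h e)" and ha: "real (card {e\<in>A. fst (h e) \<and> snd (h e)}) \<le> a"
      by auto
    have "(\<Prod>e\<in>E. F e (fst (h e)) (snd (h e))) =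
          (\<Prod>e\<in>E. if e \<in> {e\<in>A. fst (h e) \<and> snd (h e)} then t else 1)"
      by (intro prod.cong refl) (auto simp: F_def hP)
    also have "\<dots> = (\<Prod>e\<in>E \<inter> {e\<in>A. fst (h e) \<and> snd (h e)}. t)"
      by (rule prod.inter_restrict[OF E, symmetric])
    also have "E \<inter> {e\<in>A. fst (h e) \<and> snd (h e)} = {e\<in>A. fst (h e) \<and> snd (h e)}"
      using AE by auto
    also have "(\<Prod>e\<in>{e\<in>A. fst (h e) \<and> snd (h e)}. t) = t powr real (card {e\<in>A. fst (h e) \<and> snd (h e)})"
      using t by (simp add: powr_realpow)
    finally have eq: "(\<Prod>e\<in>E. F e (fst (h e)) (snd (h e))) = t powr real (card {e\<in>A. fst (h e) \<and> snd (h e)})" .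
    have "t powr a \<le> t powr real (card {e\<in>A. fst (h e) \<and> snd (h e)})"
      using ha t by (intro powr_mono') auto
    then have "t powr (-a) * t powr a \<le> t powr (-a) * (\<Prod>e\<in>E. F e (fst (h e)) (snd (h e)))"
      unfolding eq by (intro mult_left_mono) auto
    moreover have "t powr (-a) * t powr a = 1" using t by (simp add: powr_add[symmetric])
    ultimately show "1 \<le> t powr (-a) * (\<Prod>e\<in>E. F e (fst (h e)) (snd (h e)))" by simp
  qed
  also have "\<dots> = t powr (-a) * measure_pmf.expectation (Qd E q2 r) (\<lambda>h. \<Prod>e\<in>E. F e (fst (h e)) (snd (h e)))"
    by simp
  also have "measure_pmf.expectation (Qd E q2 r) (\<lambda>h. \<Prod>e\<in>E. F e (fst (h e)) (snd (h e))) =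
     (\<Prod>e\<in>E. (if e \<in> P then q2 else 1) * (if e \<in> A then 1 - q2 * r * (1 - t) else 1))"
    apply (subst Qd_prod[OF E q])
     apply (rule Fnn)
    using PA by (intro prod.cong refl) (auto simp: F_def algebra_simps)
  also have "\<dots> = (\<Prod>e\<in>E. if e \<in> P then q2 else 1) * (\<Prod>e\<in>E. if e \<in> A then 1 - q2 * r * (1 - t) else 1)"
    by (rule prod.distrib)
  also have "\<dots> = q2 ^ card P * (1 - q2 * r * (1 - t)) ^ card A"
    using PE AE by (simp add: prod.inter_restrict[OF E, symmetric] Int_absorb1)
  finally show ?thesis by simp
qed


lemma marg1:
  assumes "finite E"
  shows "map_pmf (\<lambda>(G1,G2,GH). (G1,G2)) (random_graphs V E q1 q2) =
    bind_pmf (Pi_pmf E False (\<lambda>_. bernoulli_pmf q2)) (\<lambda>f.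
      bind_pmf (Pi_pmf {e\<in>E. f e} False (\<lambda>_. bernoulli_pmf (q1/q2))) (\<lambda>g.
        return_pmf ({e \<in> {e\<in>E. f e}. g e}, {e\<in>E. f e})))"
  unfolding random_graphs_def Let_def map_bind_pmf
  by (intro bind_pmf_cong refl) (simp add: map_bind_pmf)

lemma marg2:
  assumes "finite E"
  shows "map_pmf (\<lambda>(G1,G2,GH). (G1,G2)) (random_graphs V E q1 q2) =
     map_pmf (\<lambda>h. ({e\<in>E. fst (h e) \<and> snd (h e)}, {e\<in>E. fst (h e)})) (Qd E q2 (q1/q2))"
proof -
  have "Qd E q2 (q1/q2) = Pi_pmf E (False, False) (\<lambda>_. bind_pmf (bernoulli_pmf q2)
           (\<lambda>u. bind_pmf (bernoulli_pmf (q1/q2)) (\<lambda>v. return_pmf (u, v))))"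
    unfolding Qd_def pair_pmf_def ..
  also have "\<dots> = bind_pmf (Pi_pmf E False (\<lambda>_. bernoulli_pmf q2)) (\<lambda>f.
      Pi_pmf E (False, False) (\<lambda>x. bind_pmf (bernoulli_pmf (q1/q2)) (\<lambda>v. return_pmf (f x, v))))"
    by (rule Pi_pmf_bind[OF assms])
  also have "\<dots> = bind_pmf (Pi_pmf E False (\<lambda>_. bernoulli_pmf q2)) (\<lambda>f.
      bind_pmf (Pi_pmf E False (\<lambda>_. bernoulli_pmf (q1/q2))) (\<lambda>g.
        return_pmf (\<lambda>x. if x \<in> E then (f x, g x) else (False, False))))"
    by (intro bind_pmf_cong refl, subst Pi_pmf_bind[OF assms, where d'=False]) (simp add: assms)
  finally have Q: "Qd E q2 (q1/q2) = \<dots>" .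
  show ?thesis
    unfolding marg1[OF assms] Q map_bind_pmf
    apply (rule bind_pmf_cong[OF refl])
    subgoal for f
    proof -
    have "Pi_pmf {e\<in>E. f e} False (\<lambda>_. bernoulli_pmf (q1/q2)) =
       map_pmf (\<lambda>g x. if x \<in> {e\<in>E. f e} then g x else False) (Pi_pmf E False (\<lambda>_. bernoulli_pmf (q1/q2)))"
      by (rule Pi_pmf_subset) (auto simp: assms)
    then show ?thesis
      by (simp only: bind_map_pmf) (intro bind_pmf_cong refl, auto)
    qed
    done
qed




lemma supp_GH:
  assumes "finite V" "finite E" "z \<in> set_pmf (random_graphs V E q1 q2)"
  shows "snd (snd z) \<subseteq> fst (snd z)"
proof -
  from assms(3) obtain f g where
    z: "z \<in> set_pmf (let G2 = {e \<in> E. f e}; G1 = {e \<in> G2. g e}; I = {v \<in> V. inc G1 v = {}} in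
    if (\<exists>v \<in> I. inc G2 v = {}) \<or> (\<exists>u \<in> I. \<exists>v \<in> I. adj G2 u v)
    then return_pmf (G1, G2, G1)
    else bind_pmf (Pi_pmf I undefined (\<lambda>v. pmf_of_set (inc G2 v))) (\<lambda>c.
         return_pmf (G1, G2, G1 \<union> c ` I)))"
    unfolding random_graphs_def Let_def by (auto simp: set_bind_pmf)
  define G2 where "G2 = {e \<in> E. f e}"
  define G1 where "G1 = {e \<in> G2. g e}"
  define I where "I = {v \<in> V. inc G1 v = {}}"
  have fI: "finite I" using assms(1) by (simp add: I_def)
  have fin: "finite (inc G2 v)" for v using assms(2) by (simp add: inc_def G2_def)
  show ?thesis
  proof (cases "(\<exists>v \<in> I. inc G2 v = {}) \<or> (\<exists>u \<in> I. \<exists>v \<in> I. adj G2 u v)")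
    case True
    then show ?thesis using z unfolding G2_def[symmetric] G1_def[symmetric] I_def[symmetric] Let_def
      by (auto simp: G1_def)
  next
    case False
    then obtain c where c: "c \<in> set_pmf (Pi_pmf I undefined (\<lambda>v. pmf_of_set (inc G2 v)))"
      and zc: "z = (G1, G2, G1 \<union> c ` I)"
      using z unfolding G2_def[symmetric] G1_def[symmetric] I_def[symmetric] Let_def
      by (auto simp: set_bind_pmf)
    have "c v \<in> inc G2 v" if "v \<in> I" for v
      using c that False fin[of v] by (auto simp: set_Pi_pmf[OF fI] PiE_dflt_def)
    then have "c ` I \<subseteq> G2" by (auto simp: inc_def)
    then show ?thesis using zc by (auto simp: G1_def)
  qed
qed



lemma walk_nonempty: "walk H w \<Longrightarrow> w \<noteq> []"
  by (cases w) auto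

lemma walk_Cons: "walk H (u # w) \<longleftrightarrow> (w = [] \<or> (adj H u (hd w) \<and> walk H w))"
  by (cases w) auto

lemma walk_suffix: "walk H (a @ b) \<Longrightarrow> b \<noteq> [] \<Longrightarrow> walk H b"
proof (induction a)
  case (Cons u a)
  then show ?case by (simp add: walk_Cons)
qed simp

lemma walk_distinct:
  "walk H w \<Longrightarrow> \<exists>w'. walk H w' \<and> hd w' = hd w \<and> last w' = last w \<and> distinct w'
      \<and> length w' \<le> length w \<and> set w' \<subseteq> set w"
proof (induction H w rule: walk.induct)
  case (1 H)
  then show ?case by simp
next
  case (2 H v)
  then show ?case by (intro exI[of _ "[v]"]) auto
next
  case (3 H u v vs)
  then obtain w'' where w'': "walk H w''" "hd w'' = v" "last w'' = last (v # vs)" "distinct w''"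
     "length w'' \<le> length (v # vs)" "set w'' \<subseteq> set (v # vs)" by auto
  have ne: "w'' \<noteq> []" using w''(1) walk_nonempty by blast
  show ?case
  proof (cases "u \<in> set w''")
    case True
    then obtain a b where ab: "w'' = a @ u # b" by (meson split_list)
    have "walk H (u # b)" using walk_suffix[of H a "u # b"] w''(1) ab by simp
    moreover have "last (u # b) = last (u # v # vs)"
      using w''(3) ab by (simp add: last_append)
    ultimately show ?thesis using w'' ab
      by (intro exI[of _ "u # b"]) auto
  next
    case False
    have "walk H (u # w'')" using w'' 3 ne by (simp add: walk_Cons)
    then show ?thesis using w'' False ne
      by (intro exI[of _ "u # w''"]) auto
  qed
qed

lemma adj_mono: "H \<subseteq> H' \<Longrightarrow> adj H u v \<Longrightarrow> adj H' u v"
  by (auto simp: adj_def)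

lemma walk_mono: "walk H w \<Longrightarrow> H \<subseteq> H' \<Longrightarrow> walk H' w"
  by (induction H w rule: walk.induct) (auto intro: adj_mono)

lemma walk_nth: "walk H w \<Longrightarrow> i < length w - 1 \<Longrightarrow> adj H (w ! i) (w ! Suc i)"
proof (induction H w arbitrary: i rule: walk.induct)
  case (3 H u v vs)
  then show ?case by (cases i) auto
qed auto

lemma walk_set: "walk H w \<Longrightarrow> H \<subseteq> V \<times> V \<Longrightarrow> hd w \<in> V \<Longrightarrow> set w \<subseteq> V"
  by (induction H w rule: walk.induct) (auto simp: adj_def)

lemma gdist_mono: "H \<subseteq> H' \<Longrightarrow> gdist H' x y \<le> gdist H x y"
  unfolding gdist_def by (rule INF_superset_mono) (use walk_mono in blast, rule order_refl)

lemma gdist_lt: "gdist H x y < enat m \<Longrightarrow> \<exists>w. walk H w \<and> hd w = x \<and> last w = y \<and> length w \<le> m"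
  unfolding gdist_def INF_less_iff
proof (elim bexE)
  fix xs assume xs: "xs \<in> {xs. walk H xs \<and> hd xs = x \<and> last xs = y}" "enat (length xs - 1) < enat m"
  then have "xs \<noteq> []" using walk_nonempty by blast
  then have "length xs \<le> m" using xs(2) by (cases xs) auto
  then show ?thesis using xs(1) by blast
qed



definition Wl :: "'a set \<Rightarrow> ('a \<times> 'a) set \<Rightarrow> nat \<Rightarrow> 'a list set" where
  "Wl V E j = {w. length w = Suc j \<and> walk E w \<and> set w \<subseteq> V}"

lemma finite_Wl: "finite V \<Longrightarrow> finite (Wl V E j)"
  unfolding Wl_def
  by (rule finite_subset[OF _ finite_lists_length_eq[of V "Suc j"]]) auto

lemma card_nbrs:
  assumes "finite E"
  shows "card {u. adj E u v} \<le> card (inc E v)"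
proof -
  have "{u. adj E u v} \<subseteq> (\<lambda>e. if fst e = v then snd e else fst e) ` inc E v"
  proof
    fix u assume "u \<in> {u. adj E u v}"
    then have "(u, v) \<in> E \<or> (v, u) \<in> E" by (simp add: adj_def)
    then show "u \<in> (\<lambda>e. if fst e = v then snd e else fst e) ` inc E v"
    proof
      assume "(u, v) \<in> E"
      then show ?thesis by (intro image_eqI[where x="(u, v)"]) (auto simp: inc_def)
    next
      assume "(v, u) \<in> E"
      then show ?thesis by (intro image_eqI[where x="(v, u)"]) (auto simp: inc_def)
    qed
  qed
  then have "card {u. adj E u v} \<le> card ((\<lambda>e. if fst e = v then snd e else fst e) ` inc E v)"
    by (intro card_mono) (auto simp: inc_def assms)
  also have "\<dots> \<le> card (inc E v)" by (rule card_image_le) (auto simp: inc_def assms)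
  finally show ?thesis .
qed

lemma card_Wl:
  assumes V: "finite V" and EV: "E \<subseteq> V \<times> V" and deg: "\<And>v. v \<in> V \<Longrightarrow> card (inc E v) \<le> k"
  shows "card (Wl V E j) \<le> card V * k ^ j"
proof (induction j)
  case 0
  have "Wl V E 0 = (\<lambda>v. [v]) ` V"
    by (auto simp: Wl_def length_Suc_conv)
  then show ?case by (simp add: card_image_le V)
next
  case (Suc j)
  have fE: "finite E" using V EV finite_subset by blast
  have fadj: "finite {u. adj E u v}" for v
    by (rule finite_subset[OF _ V]) (use EV in \<open>auto simp: adj_def\<close>)
  have "Wl V E (Suc j) \<subseteq> (\<Union>w\<in>Wl V E j. (\<lambda>u. u # w) ` {u. adj E u (hd w)})"
  proof
    fix w assume "w \<in> Wl V E (Suc j)"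
    then obtain u w' where w: "w = u # w'" "length w' = Suc j" "walk E (u # w')" "set (u # w') \<subseteq> V"
      by (auto simp: Wl_def length_Suc_conv)
    then have "w' \<noteq> []" by auto
    then have "w' \<in> Wl V E j" "adj E u (hd w')" using w by (auto simp: Wl_def walk_Cons)
    then show "w \<in> (\<Union>w\<in>Wl V E j. (\<lambda>u. u # w) ` {u. adj E u (hd w)})" using w by auto
  qed
  then have "card (Wl V E (Suc j)) \<le> card (\<Union>w\<in>Wl V E j. (\<lambda>u. u # w) ` {u. adj E u (hd w)})"
    by (intro card_mono finite_UN_I finite_Wl V finite_imageI fadj)
  also have "\<dots> \<le> (\<Sum>w\<in>Wl V E j. card ((\<lambda>u. u # w) ` {u. adj E u (hd w)}))"
    by (rule card_UN_le) (rule finite_Wl[OF V])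
  also have "\<dots> \<le> (\<Sum>w\<in>Wl V E j. k)"
  proof (rule sum_mono)
    fix w assume w: "w \<in> Wl V E j"
    then have "hd w \<in> V" by (cases w) (auto simp: Wl_def)
    have "card ((\<lambda>u. u # w) ` {u. adj E u (hd w)}) \<le> card {u. adj E u (hd w)}"
      by (rule card_image_le[OF fadj])
    also have "\<dots> \<le> card (inc E (hd w))" by (rule card_nbrs[OF fE])
    also have "\<dots> \<le> k" using deg \<open>hd w \<in> V\<close> by auto
    finally show "card ((\<lambda>u. u # w) ` {u. adj E u (hd w)}) \<le> k" .
  qed
  also have "\<dots> = card (Wl V E j) * k" by simp
  also have "\<dots> \<le> card V * k ^ j * k" using Suc by simp
  finally show ?case by (simp add: ac_simps)
qed



definition ed :: "('a \<times> 'a) set \<Rightarrow> 'a list \<Rightarrow> ('a \<times> 'a) set" where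
  "ed E w = {e\<in>E. \<exists>i<length w - 1. e = (w!i, w!Suc i) \<or> e = (w!Suc i, w!i)}"

lemma card_ed:
  assumes E: "finite E" and w: "walk E w" "distinct w"
  shows "length w - 1 \<le> card (ed E w)"
proof -
  define eo where "eo i = (if (w!i, w!Suc i) \<in> E then (w!i, w!Suc i) else (w!Suc i, w!i))" for i
  have eo_in: "eo i \<in> ed E w" if "i < length w - 1" for i
    using walk_nth[OF w(1) that] that by (auto simp: eo_def ed_def adj_def)
  have inj: "inj_on eo {..<length w - 1}"
  proof (rule inj_onI)
    fix i j assume i: "i \<in> {..<length w - 1}" and j: "j \<in> {..<length w - 1}" and eq: "eo i = eo j"
    have d: "w ! a = w ! b \<longleftrightarrow> a = b" if "a < length w" "b < length w" for a b
      using w(2) that nth_eq_iff_index_eq by blast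
    from i j have li: "i < length w" "Suc i < length w" "j < length w" "Suc j < length w" by auto
    from eq have "(w!i = w!j \<and> w!Suc i = w!Suc j) \<or> (w!i = w!Suc j \<and> w!Suc i = w!j)"
      by (auto simp: eo_def split: if_splits)
    then show "i = j" using d li by auto
  qed
  have sub: "eo ` {..<length w - 1} \<subseteq> ed E w" using eo_in by auto
  have fin: "finite (ed E w)" using E by (simp add: ed_def)
  have "card {..<length w - 1} \<le> card (ed E w)"
    by (rule card_inj_on_le[OF inj sub fin])
  then show ?thesis by simp
qed

lemma ed_sub:
  assumes "walk G2 w" "G2 \<subseteq> E" "E \<subseteq> X \<times> Y" "X \<inter> Y = {}"
  shows "ed E w \<subseteq> G2"
proof
  fix e assume "e \<in> ed E w"
  then obtain i where i: "i < length w - 1" "e \<in> E" "e = (w!i, w!Suc i) \<or> e = (w!Suc i, w!i)"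
    by (auto simp: ed_def)
  have "adj G2 (w!i) (w!Suc i)" by (rule walk_nth[OF assms(1) i(1)])
  moreover have nsym: "False" if "(a, b) \<in> E" "(b, a) \<in> E" for a b
    using that assms(3,4) by blast
  ultimately show "e \<in> G2" using i assms(2) unfolding adj_def by (metis subsetD)
qed

lemma ed_inc:
  assumes "distinct w" "p < length w" "e \<in> ed E w" "fst e = w!p \<or> snd e = w!p"
  shows "\<exists>i<length w - 1. (i = p \<or> Suc i = p) \<and> (e = (w!i, w!Suc i) \<or> e = (w!Suc i, w!i))"
proof -
  obtain i where i: "i < length w - 1" "e = (w!i, w!Suc i) \<or> e = (w!Suc i, w!i)"
    using assms(3) by (auto simp: ed_def)
  have d: "w ! a = w ! b \<longleftrightarrow> a = b" if "a < length w" "b < length w" for a b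
    using assms(1) that nth_eq_iff_index_eq by blast
  have "i = p \<or> Suc i = p" using i assms(2,4) d[of i p] d[of "Suc i" p] by auto
  then show ?thesis using i by auto
qed



lemma exp8: "exp (-8::real) \<le> 1/1000"
proof -
  have "5/2 \<le> exp (1::real)" using exp_lower_Taylor_quadratic[of 1] by simp
  then have "(5/2::real) ^ 8 \<le> exp 1 ^ 8" by (intro power_mono) auto
  also have "exp (1::real) ^ 8 = exp 8" by (simp flip: exp_of_nat_mult)
  finally have "(5/2::real) ^ 8 \<le> exp 8" .
  moreover have "(1000::real) \<le> (5/2) ^ 8" by (simp add: power_numeral_reduce)
  ultimately have "1000 \<le> exp (8::real)" by linarith
  then show ?thesis by (simp add: exp_minus field_simps)
qed

lemma edge_bound:
  fixes q M :: real and m :: nat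
  assumes q: "0 \<le> q" "q \<le> 1" and m: "M \<le> real m"
  shows "(1 - q * (1 - exp (-8))) ^ m \<le> exp (-(999/1000) * q * M)"
proof -
  have t: "exp (-8::real) \<le> 1/1000" "0 < exp (-8::real)" using exp8 by auto
  have "q * (1 - exp (-8)) \<le> 1" using q t by (intro mult_le_one) auto
  then have "0 \<le> 1 - q * (1 - exp (-8))" by simp
  then have "(1 - q * (1 - exp (-8))) ^ m \<le> exp (- (q * (1 - exp (-8)))) ^ m"
    by (intro power_mono) (use exp_ge_add_one_self[of "- (q * (1 - exp (-8)))"] in auto)
  also have "\<dots> = exp (- (q * (1 - exp (-8))) * real m)"
    by (simp add: exp_of_nat_mult[symmetric] mult.commute)
  also have "\<dots> \<le> exp (-(999/1000) * q * M)"
  proof -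
    have "(999/1000) * q * M \<le> (999/1000) * q * real m"
      using q m by (intro mult_left_mono) auto
    also have "\<dots> \<le> q * (1 - exp (-8)) * real m"
    proof -
      have "999/1000 \<le> 1 - exp (-8::real)" using t by simp
      then have "(999/1000) * q \<le> q * (1 - exp (-8))" using q
        by (metis mult.commute mult_left_mono)
      then show ?thesis by (intro mult_right_mono) auto
    qed
    finally show ?thesis by simp
  qed
  finally show ?thesis .
qed

lemma t_powr:
  assumes "0 < x"
  shows "exp (-8::real) powr (- (c * (ln x / 1000))) = x powr (8 * c / 1000)"
  using assms by (simp add: powr_def)

lemma par_card:
  assumes bip: "bip_regular X Y E n k" and x: "x \<in> X \<union> Y" "x \<notin> Gamma X Y E S T n k"
  shows "real k - real n powr (-1/20) * real k < real (card {e\<in>inc E x. \<not> is_cross S T e})"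
proof -
  have fE: "finite E" using bip unfolding bip_regular_def by (meson finite_SigmaI finite_subset)
  have fin: "finite (inc E x)" using fE by (simp add: inc_def)
  have "inc E x = {e\<in>inc E x. \<not> is_cross S T e} \<union> {e\<in>inc E x. is_cross S T e}" by auto
  then have "card (inc E x) = card {e\<in>inc E x. \<not> is_cross S T e} + card {e\<in>inc E x. is_cross S T e}"
    using fin by (metis (no_types, lifting) card_Un_disjoint disjoint_iff finite_Un mem_Collect_eq)
  moreover have "card (inc E x) = k" using bip x unfolding bip_regular_def by auto
  moreover have "real (deg_cr S T E x) < real n powr (-1/20) * real k"
    using x unfolding Gamma_def by auto
  ultimately show ?thesis unfolding deg_cr_def by linarith
qed

lemma vlow_count:
  assumes fE: "finite E" and A: "A \<subseteq> {e\<in>inc E x. \<not> is_cross S T e}"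
    and x: "x \<in> Vlow X Y E S T n k {e\<in>E. fst (h e) \<and> snd (h e)}"
  shows "real (card {e\<in>A. fst (h e) \<and> snd (h e)}) \<le> ln (real n) / 1000"
proof -
  have "{e\<in>A. fst (h e) \<and> snd (h e)} \<subseteq> {e \<in> inc {e\<in>E. fst (h e) \<and> snd (h e)} x. \<not> is_cross S T e}"
    using A by (auto simp: inc_def)
  then have "card {e\<in>A. fst (h e) \<and> snd (h e)} \<le> deg_par S T {e\<in>E. fst (h e) \<and> snd (h e)} x"
    unfolding deg_par_def by (intro card_mono) (auto simp: inc_def fE)
  then show ?thesis using x unfolding Vlow_def by auto
qed


lemma bip_facts:
  assumes "bip_regular X Y E n k"
  shows "finite (X \<union> Y)" "finite E" "E \<subseteq> X \<times> Y" "E \<subseteq> (X \<union> Y) \<times> (X \<union> Y)" "X \<inter> Y = {}"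
    "card (X \<union> Y) = 2 * n" "\<And>v. v \<in> X \<union> Y \<Longrightarrow> card (inc E v) = k"
  using assms unfolding bip_regular_def
  by (auto simp: card_Un_disjoint intro: finite_subset[of E "X \<times> Y"])

lemma part1:
  fixes q1 q2 :: real
  assumes bip: "bip_regular X Y E n k" and n: "0 < n"
    and q: "0 \<le> q1" "q1 \<le> q2" "0 < q2" "q2 \<le> 1"
  shows "measure_pmf.prob (Qd E q2 (q1/q2))
      {h. \<not> real (card (Vlow X Y E S T n k {e\<in>E. fst (h e) \<and> snd (h e)})) \<le> real n powr 0.01}
    \<le> 2 * real n * (real n powr (8/1000) * exp (-(999/1000) * q1 * (real k - real n powr (-1/20) * real k)))
       / real n powr 0.01"
proof -
  note bf = bip_facts[OF bip]
  define V where "V = X \<union> Y"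
  define Ga where "Ga = Gamma X Y E S T n k"
  define N where "N = real n powr 0.01"
  define a0 where "a0 = ln (real n) / 1000"
  define Par where "Par x = {e\<in>inc E x. \<not> is_cross S T e}" for x
  define C where "C x = {h. real (card {e\<in>Par x. fst (h e) \<and> snd (h e)}) \<le> a0}" for x :: 'a
  define \<beta> where "\<beta> = real n powr (8/1000) * exp (-(999/1000) * q1 * (real k - real n powr (-1/20) * real k))"
  define Q where "Q = Qd E q2 (q1/q2)"
  have N: "0 < N" using n by (simp add: N_def)
  have r: "0 \<le> q1/q2" "q1/q2 \<le> 1" using q by auto
  have q2r: "q2 * (q1/q2) = q1" using q by simp
  have fV: "finite V" using bf by (simp add: V_def)
  have fE: "finite E" using bf by simp
  have PE: "Par x \<subseteq> E" for x by (auto simp: Par_def inc_def)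
  have probC: "measure_pmf.prob Q (C x) \<le> \<beta>" if x: "x \<in> V - Ga" for x
  proof -
    have "measure_pmf.prob Q (C x) = measure_pmf.prob Q {h. {} \<subseteq> {e\<in>E. fst (h e)} \<and>
            real (card {e\<in>Par x. fst (h e) \<and> snd (h e)}) \<le> a0}"
      by (simp add: C_def)
    also have "\<dots> \<le> exp (-8) powr (-a0) * q2 ^ card ({} :: ('a \<times> 'a) set) * (1 - q2 * (q1/q2) * (1 - exp (-8))) ^ card (Par x)"
      unfolding Q_def
      apply (rule L_gen)
      using fE PE q r by auto
    also have "\<dots> = real n powr (8/1000) * (1 - q1 * (1 - exp (-8))) ^ card (Par x)"
      using t_powr[of "real n" 1] n q2r by (simp add: a0_def)
    also have "\<dots> \<le> \<beta>"
      unfolding \<beta>_def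
    proof (intro mult_left_mono edge_bound)
      show "real k - real n powr (-1/20) * real k \<le> real (card (Par x))"
        using par_card[OF bip, of x S T] x by (simp add: Par_def V_def Ga_def)
    qed (use q in auto)
    finally show ?thesis .
  qed
  have "measure_pmf.prob Q {h. \<not> real (card (Vlow X Y E S T n k {e\<in>E. fst (h e) \<and> snd (h e)})) \<le> N}
      \<le> measure_pmf.expectation Q (\<lambda>h. (\<Sum>x\<in>V - Ga. indicator (C x) h) / N)"
  proof (rule prob_le_integral)
    show "finite (set_pmf Q)" unfolding Q_def by (rule finite_Qd[OF fE])
  next
    fix h show "0 \<le> (\<Sum>x\<in>V - Ga. indicator (C x) h) / N"
      using N by (auto intro!: sum_nonneg divide_nonneg_pos)
  next
    fix h assume h: "h \<in> {h. \<not> real (card (Vlow X Y E S T n k {e\<in>E. fst (h e) \<and> snd (h e)})) \<le> N}"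
    have sub: "Vlow X Y E S T n k {e\<in>E. fst (h e) \<and> snd (h e)} \<subseteq> {x\<in>V - Ga. h \<in> C x}"
    proof
      fix x assume x: "x \<in> Vlow X Y E S T n k {e\<in>E. fst (h e) \<and> snd (h e)}"
      have "real (card {e\<in>Par x. fst (h e) \<and> snd (h e)}) \<le> ln (real n) / 1000"
        by (rule vlow_count[OF fE _ x]) (simp add: Par_def)
      then show "x \<in> {x\<in>V - Ga. h \<in> C x}" using x
        by (auto simp: C_def a0_def Vlow_def V_def Ga_def)
    qed
    have "real (card (Vlow X Y E S T n k {e\<in>E. fst (h e) \<and> snd (h e)})) \<le> real (card {x\<in>V - Ga. h \<in> C x})"
      by (intro of_nat_mono card_mono[OF _ sub]) (simp add: fV)
    also have "real (card {x\<in>V - Ga. h \<in> C x}) = (\<Sum>x\<in>V - Ga. indicator (C x) h)"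
    proof -
      have "(\<Sum>x\<in>V - Ga. indicator (C x) h) = (\<Sum>x\<in>V - Ga. if h \<in> C x then 1 else (0::real))"
        by (intro sum.cong refl) (simp add: indicator_def)
      also have "\<dots> = real (card {x\<in>V - Ga. h \<in> C x})"
        by (simp add: sum.inter_filter[symmetric] fV)
      finally show ?thesis by simp
    qed
    finally have "N < (\<Sum>x\<in>V - Ga. indicator (C x) h)" using h by auto
    then show "1 \<le> (\<Sum>x\<in>V - Ga. indicator (C x) h) / N" using N by simp
  qed
  also have "\<dots> = (\<Sum>x\<in>V - Ga. measure_pmf.prob Q (C x)) / N"
    by (simp only: integral_divide_zero, subst Bochner_Integration.integral_sum)
       (auto intro!: integrable_measure_pmf_finite simp: Q_def finite_Qd fE)
  also have "\<dots> \<le> (\<Sum>x\<in>V - Ga. \<beta>) / N"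
    using N probC by (intro divide_right_mono sum_mono) auto
  also have "\<dots> \<le> 2 * real n * \<beta> / N"
  proof -
    have "card (V - Ga) \<le> card V" by (rule card_mono[OF fV Diff_subset])
    then have c: "real (card (V - Ga)) \<le> 2 * real n" using bf(6) by (simp add: V_def)
    have b: "0 \<le> \<beta>" by (simp add: \<beta>_def)
    have "(\<Sum>x\<in>V - Ga. \<beta>) = real (card (V - Ga)) * \<beta>" by simp
    also have "\<dots> \<le> 2 * real n * \<beta>" by (rule mult_right_mono[OF c b])
    finally show ?thesis using N by (intro divide_right_mono) auto
  qed
  finally show ?thesis by (simp add: Q_def N_def \<beta>_def)
qed


lemma reduce:
  assumes fV: "finite V" and fE: "finite E"
  shows "measure_pmf.prob (random_graphs V E q1 q2)
      {(G1, G2, GH). \<not> (C1 G1 \<and> (\<forall>x\<in>Vl G1. \<forall>y\<in>Vl G1. x \<noteq> y \<longrightarrow> gdist GH x y \<ge> 6))}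
    \<le> measure_pmf.prob (Qd E q2 (q1/q2))
      {h. \<not> (C1 {e\<in>E. fst (h e) \<and> snd (h e)} \<and>
         (\<forall>x\<in>Vl {e\<in>E. fst (h e) \<and> snd (h e)}. \<forall>y\<in>Vl {e\<in>E. fst (h e) \<and> snd (h e)}.
            x \<noteq> y \<longrightarrow> gdist {e\<in>E. fst (h e)} x y \<ge> 6))}"
proof -
  define RG where "RG = random_graphs V E q1 q2"
  define Good where "Good G1 G2 \<longleftrightarrow> C1 G1 \<and> (\<forall>x\<in>Vl G1. \<forall>y\<in>Vl G1. x \<noteq> y \<longrightarrow> gdist G2 x y \<ge> 6)"
    for G1 G2 :: "('a \<times> 'a) set"
  let ?Bad = "{(G1, G2, GH). \<not> (C1 G1 \<and> (\<forall>x\<in>Vl G1. \<forall>y\<in>Vl G1. x \<noteq> y \<longrightarrow> gdist GH x y \<ge> 6))}"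
  have "measure_pmf.prob RG ?Bad = measure_pmf.prob RG (?Bad \<inter> set_pmf RG)"
    by (simp add: measure_Int_set_pmf)
  also have "\<dots> \<le> measure_pmf.prob RG {z. \<not> Good (fst z) (fst (snd z))}"
  proof (rule measure_pmf.finite_measure_mono)
    show "?Bad \<inter> set_pmf RG \<subseteq> {z. \<not> Good (fst z) (fst (snd z))}"
    proof
      fix z assume z: "z \<in> ?Bad \<inter> set_pmf RG"
      obtain G1 G2 GH where zz: "z = (G1, G2, GH)" by (cases z) auto
      have "GH \<subseteq> G2" using supp_GH[OF fV fE, of z q1 q2] z zz by (auto simp: RG_def)
      then have "\<And>x y. gdist G2 x y \<le> gdist GH x y" by (rule gdist_mono)
      then show "z \<in> {z. \<not> Good (fst z) (fst (snd z))}"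
        using z zz unfolding Good_def by (auto; meson order_trans)
    qed
  qed simp
  also have "\<dots> = measure_pmf.prob (map_pmf (\<lambda>(G1,G2,GH). (G1,G2)) RG) {p. \<not> Good (fst p) (snd p)}"
    by (simp add: vimage_def case_prod_unfold)
  also have "\<dots> = measure_pmf.prob (map_pmf (\<lambda>h. ({e\<in>E. fst (h e) \<and> snd (h e)}, {e\<in>E. fst (h e)})) (Qd E q2 (q1/q2)))
        {p. \<not> Good (fst p) (snd p)}"
    unfolding RG_def marg2[OF fE] ..
  also have "\<dots> = measure_pmf.prob (Qd E q2 (q1/q2))
      {h. \<not> Good {e\<in>E. fst (h e) \<and> snd (h e)} {e\<in>E. fst (h e)}}"
    by (simp add: vimage_def)
  finally show ?thesis unfolding RG_def Good_def .
qed


lemma card4: "card {a, b, c, d} \<le> 4"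
proof -
  have "card {a, b, c, d} = card (set [a, b, c, d])" by simp
  also have "\<dots> \<le> length [a, b, c, d]" by (rule card_length)
  finally show ?thesis by simp
qed

lemma diff_card:
  assumes "finite A" "A \<inter> B \<subseteq> {a, b, c, d}"
  shows "real (card A) - 4 \<le> real (card (A - B))"
proof -
  have "card (A \<inter> B) \<le> card {a, b, c, d}" by (rule card_mono) (use assms in auto)
  then have "card (A \<inter> B) \<le> 4" using card4[of a b c d] by linarith
  moreover have "card (A - B) = card A - card (A \<inter> B)"
    by (rule card_Diff_subset_Int) (use assms in auto)
  moreover have "card (A \<inter> B) \<le> card A" by (rule card_mono) (use assms in auto)
  ultimately show ?thesis by linarith
qed

lemma hd_edges:
  assumes "distinct w" "2 \<le> length w" "e \<in> ed E w" "fst e = hd w \<or> snd e = hd w"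
  shows "e = (hd w, w!1) \<or> e = (w!1, hd w)"
proof -
  have "hd w = w ! 0" using assms(2) by (cases w) auto
  have "\<exists>i<length w - 1. (i = 0 \<or> Suc i = 0) \<and> (e = (w!i, w!Suc i) \<or> e = (w!Suc i, w!i))"
    by (rule ed_inc[OF assms(1) _ assms(3)]) (use assms \<open>hd w = w ! 0\<close> in auto)
  then obtain i where "i < length w - 1" "i = 0 \<or> Suc i = 0" "e = (w!i, w!Suc i) \<or> e = (w!Suc i, w!i)"
    by blast
  then show ?thesis using \<open>hd w = w ! 0\<close> by auto
qed

lemma last_edges:
  assumes "distinct w" "2 \<le> length w" "e \<in> ed E w" "fst e = last w \<or> snd e = last w"
  shows "e = (w!(length w - 2), last w) \<or> e = (last w, w!(length w - 2))"
proof -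
  have lw: "last w = w ! (length w - 1)" using assms(2) by (cases w rule: rev_cases) auto
  have "\<exists>i<length w - 1. (i = length w - 1 \<or> Suc i = length w - 1) \<and> (e = (w!i, w!Suc i) \<or> e = (w!Suc i, w!i))"
    by (rule ed_inc[OF assms(1) _ assms(3)]) (use assms lw in auto)
  then obtain i where "i < length w - 1" "i = length w - 1 \<or> Suc i = length w - 1"
      "e = (w!i, w!Suc i) \<or> e = (w!Suc i, w!i)"
    by blast
  then have "i = length w - 2" "Suc i = length w - 1" using assms(2) by auto
  then show ?thesis using \<open>e = (w!i, w!Suc i) \<or> e = (w!Suc i, w!i)\<close> lw by metis
qed


lemma part2:
  fixes q1 q2 :: real
  assumes bip: "bip_regular X Y E n k" and n: "0 < n"
    and q: "0 \<le> q1" "q1 \<le> q2" "0 < q2" "q2 \<le> 1"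
  shows "measure_pmf.prob (Qd E q2 (q1/q2))
      {h. \<exists>x\<in>Vlow X Y E S T n k {e\<in>E. fst (h e) \<and> snd (h e)}.
          \<exists>y\<in>Vlow X Y E S T n k {e\<in>E. fst (h e) \<and> snd (h e)}.
            x \<noteq> y \<and> \<not> 6 \<le> gdist {e\<in>E. fst (h e)} x y}
    \<le> (\<Sum>j\<in>{1..5}. 2 * real n * real k ^ j * (real n powr (16/1000) * q2 ^ j *
          exp (-(999/1000) * q1 * (2 * (real k - real n powr (-1/20) * real k - 4)))))"
proof -
  note bf = bip_facts[OF bip]
  define V where "V = X \<union> Y"
  define Ga where "Ga = Gamma X Y E S T n k"
  define a0 where "a0 = ln (real n) / 1000"
  define Par where "Par x = {e\<in>inc E x. \<not> is_cross S T e}" for x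
  define Q where "Q = Qd E q2 (q1/q2)"
  define Wd where "Wd j = {w \<in> Wl V E j. distinct w \<and> hd w \<notin> Ga \<and> last w \<notin> Ga}" for j
  define Ax where "Ax w = Par (hd w) - (ed E w \<union> inc E (last w))" for w
  define Ay where "Ay w = Par (last w) - (ed E w \<union> inc E (hd w))" for w
  define B where "B w = {h. ed E w \<subseteq> {e\<in>E. fst (h e)} \<and>
      real (card {e\<in>Ax w \<union> Ay w. fst (h e) \<and> snd (h e)}) \<le> 2 * a0}" for w
  define \<gamma> where "\<gamma> j = real n powr (16/1000) * q2 ^ j *
          exp (-(999/1000) * q1 * (2 * (real k - real n powr (-1/20) * real k - 4)))" for j :: nat
  have r: "0 \<le> q1/q2" "q1/q2 \<le> 1" using q by auto
  have q2r: "q2 * (q1/q2) = q1" using q by simp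
  have fV: "finite V" using bf by (simp add: V_def)
  have fE: "finite E" using bf by simp
  have EV: "E \<subseteq> V \<times> V" using bf by (simp add: V_def)
  have PE: "Par x \<subseteq> E" for x by (auto simp: Par_def inc_def)
  have fPar: "finite (Par x)" for x using PE fE finite_subset by blast
  have degk: "card (inc E v) \<le> k" if "v \<in> V" for v using bf that by (simp add: V_def)
  have finWd: "finite (Wd j)" for j
    by (rule finite_subset[OF _ finite_Wl[OF fV, of E j]]) (auto simp: Wd_def)
  have cardWd: "real (card (Wd j)) \<le> 2 * real n * real k ^ j" for j
  proof -
    have "card (Wd j) \<le> card (Wl V E j)"
      by (rule card_mono[OF finite_Wl[OF fV]]) (auto simp: Wd_def)
    also have "\<dots> \<le> card V * k ^ j" by (rule card_Wl[OF fV EV degk])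
    finally show ?thesis using bf(6) unfolding V_def by (metis of_nat_le_iff of_nat_mult of_nat_numeral of_nat_power)
  qed
  have parb: "real k - real n powr (-1/20) * real k - 4 \<le> real (card (Par x)) - 4"
    if "x \<in> V" "x \<notin> Ga" for x
    using par_card[OF bip, of x S T] that by (simp add: Par_def V_def Ga_def)
  have probB: "measure_pmf.prob Q (B w) \<le> \<gamma> j" if w: "w \<in> Wd j" "1 \<le> j" for w j
  proof -
    have lw: "length w = Suc j" and wE: "walk E w" and sw: "set w \<subseteq> V" and dw: "distinct w"
      and hG: "hd w \<notin> Ga" and lG: "last w \<notin> Ga"
      using w by (auto simp: Wd_def Wl_def)
    have len2: "2 \<le> length w" using lw w(2) by simp
    have hV: "hd w \<in> V" and lV: "last w \<in> V" using sw lw by (cases w; auto)+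
    have hl: "hd w \<noteq> last w"
      using dw len2 by (cases w) (auto simp: last_ConsR)
    have dis: "(Ax w) \<inter> (Ay w) = {}"
      by (auto simp: Ax_def Ay_def Par_def)
    have cAx: "real k - real n powr (-1/20) * real k - 4 \<le> real (card (Ax w))"
    proof -
      have "Par (hd w) \<inter> (ed E w \<union> inc E (last w)) \<subseteq>
          {(hd w, w!1), (w!1, hd w), (hd w, last w), (last w, hd w)}"
      proof
        fix e assume e: "e \<in> Par (hd w) \<inter> (ed E w \<union> inc E (last w))"
        then have ex: "fst e = hd w \<or> snd e = hd w" by (auto simp: Par_def inc_def)
        show "e \<in> {(hd w, w!1), (w!1, hd w), (hd w, last w), (last w, hd w)}"
        proof (cases "e \<in> ed E w")
          case True
          then show ?thesis using hd_edges[OF dw len2 True ex] by auto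
        next
          case False
          then have "fst e = last w \<or> snd e = last w" using e by (auto simp: inc_def)
          then show ?thesis using ex hl by (cases e) auto
        qed
      qed
      then have "real (card (Par (hd w))) - 4 \<le> real (card (Ax w))"
        unfolding Ax_def by (rule diff_card[OF fPar])
      then show ?thesis using parb[OF hV hG] by linarith
    qed
    have cAy: "real k - real n powr (-1/20) * real k - 4 \<le> real (card (Ay w))"
    proof -
      have "Par (last w) \<inter> (ed E w \<union> inc E (hd w)) \<subseteq>
          {(w!(length w - 2), last w), (last w, w!(length w - 2)), (hd w, last w), (last w, hd w)}"
      proof
        fix e assume e: "e \<in> Par (last w) \<inter> (ed E w \<union> inc E (hd w))"
        then have ex: "fst e = last w \<or> snd e = last w" by (auto simp: Par_def inc_def)
        show "e \<in> {(w!(length w - 2), last w), (last w, w!(length w - 2)), (hd w, last w), (last w, hd w)}"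
        proof (cases "e \<in> ed E w")
          case True
          then show ?thesis using last_edges[OF dw len2 True ex] by auto
        next
          case False
          then have "fst e = hd w \<or> snd e = hd w" using e by (auto simp: inc_def)
          then show ?thesis using ex hl by (cases e) auto
        qed
      qed
      then have "real (card (Par (last w))) - 4 \<le> real (card (Ay w))"
        unfolding Ay_def by (rule diff_card[OF fPar])
      then show ?thesis using parb[OF lV lG] by linarith
    qed
    have cA: "2 * (real k - real n powr (-1/20) * real k - 4) \<le> real (card (Ax w \<union> Ay w))"
    proof -
      have "card (Ax w \<union> Ay w) = card (Ax w) + card (Ay w)"
        by (rule card_Un_disjoint) (use dis fPar in \<open>auto simp: Ax_def Ay_def\<close>)
      then show ?thesis using cAx cAy by simp
    qed
    have edE: "ed E w \<subseteq> E" by (auto simp: ed_def)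
    have AE: "Ax w \<union> Ay w \<subseteq> E" using PE by (auto simp: Ax_def Ay_def)
    have edA: "ed E w \<inter> (Ax w \<union> Ay w) = {}" by (auto simp: Ax_def Ay_def)
    have "measure_pmf.prob Q (B w) \<le> exp (-8) powr (-(2 * a0)) * q2 ^ card (ed E w) *
        (1 - q2 * (q1/q2) * (1 - exp (-8))) ^ card (Ax w \<union> Ay w)"
      unfolding Q_def B_def
      apply (rule L_gen)
      using fE edE AE edA q r by auto
    also have "\<dots> \<le> real n powr (16/1000) * q2 ^ j *
        exp (-(999/1000) * q1 * (2 * (real k - real n powr (-1/20) * real k - 4)))"
    proof -
      have e1: "exp (-8) powr (-(2 * a0)) = real n powr (16/1000)"
        using t_powr[of "real n" 2] n by (simp add: a0_def)
      have "j \<le> card (ed E w)" using card_ed[OF fE wE dw] lw by simp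
      then have e2: "q2 ^ card (ed E w) \<le> q2 ^ j" using q by (intro power_decreasing) auto
      have e3: "(1 - q1 * (1 - exp (-8))) ^ card (Ax w \<union> Ay w) \<le>
          exp (-(999/1000) * q1 * (2 * (real k - real n powr (-1/20) * real k - 4)))"
        by (rule edge_bound) (use q cA in auto)
      have nn: "0 \<le> (1 - q1 * (1 - exp (-8))) ^ card (Ax w \<union> Ay w)"
      proof -
        have "q1 * (1 - exp (-8)) \<le> 1" using q by (intro mult_le_one) auto
        then show ?thesis by simp
      qed
      show ?thesis unfolding e1 q2r
        by (intro mult_mono mult_left_mono e2 e3 nn) (use q in auto)
    qed
    finally show ?thesis by (simp add: \<gamma>_def)
  qed
  have incl: "{h. \<exists>x\<in>Vlow X Y E S T n k {e\<in>E. fst (h e) \<and> snd (h e)}.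
          \<exists>y\<in>Vlow X Y E S T n k {e\<in>E. fst (h e) \<and> snd (h e)}.
            x \<noteq> y \<and> \<not> 6 \<le> gdist {e\<in>E. fst (h e)} x y} \<subseteq> (\<Union>j\<in>{1..5}. \<Union>w\<in>Wd j. B w)"
  proof
    fix h assume "h \<in> {h. \<exists>x\<in>Vlow X Y E S T n k {e\<in>E. fst (h e) \<and> snd (h e)}.
          \<exists>y\<in>Vlow X Y E S T n k {e\<in>E. fst (h e) \<and> snd (h e)}.
            x \<noteq> y \<and> \<not> 6 \<le> gdist {e\<in>E. fst (h e)} x y}"
    then obtain x y where x: "x \<in> Vlow X Y E S T n k {e\<in>E. fst (h e) \<and> snd (h e)}"
      and y: "y \<in> Vlow X Y E S T n k {e\<in>E. fst (h e) \<and> snd (h e)}"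
      and xy: "x \<noteq> y" and gd: "\<not> 6 \<le> gdist {e\<in>E. fst (h e)} x y" by blast
    define G2 where "G2 = {e\<in>E. fst (h e)}"
    have G2E: "G2 \<subseteq> E" by (auto simp: G2_def)
    have "gdist G2 x y < enat 6" using gd by (simp add: G2_def numeral_eq_enat not_le)
    from gdist_lt[OF this] obtain w0 where w0: "walk G2 w0" "hd w0 = x" "last w0 = y" "length w0 \<le> 6"
      by blast
    from walk_distinct[OF w0(1)] obtain w where
      w': "walk G2 w" "hd w = hd w0" "last w = last w0" "distinct w" "length w \<le> length w0"
      by blast
    have w: "walk G2 w" "hd w = x" "last w = y" "distinct w" "length w \<le> 6"
      using w' w0 by auto
    have wne: "w \<noteq> []" using w(1) walk_nonempty by blast
    have len2: "2 \<le> length w"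
    proof (rule ccontr)
      assume "\<not> 2 \<le> length w"
      moreover have "length w \<noteq> 0" using wne by simp
      ultimately have "length w = 1" by linarith
      then obtain v where "w = [v]" by (cases w) auto
      then show False using w xy by auto
    qed
    define j where "j = length w - 1"
    have j: "j \<in> {1..5}" "length w = Suc j" using len2 w(5) by (auto simp: j_def)
    have xV: "x \<in> V" and xG: "x \<notin> Ga" using x by (auto simp: Vlow_def V_def Ga_def)
    have yV: "y \<in> V" and yG: "y \<notin> Ga" using y by (auto simp: Vlow_def V_def Ga_def)
    have wE: "walk E w" using walk_mono[OF w(1) G2E] .
    have sw: "set w \<subseteq> V" using walk_set[OF wE EV] w(2) xV by blast
    have wW: "w \<in> Wd j" using wE sw w j xG yG by (auto simp: Wd_def Wl_def)
    have "h \<in> B w"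
    proof -
      have "ed E w \<subseteq> G2" by (rule ed_sub[OF w(1) G2E bf(3) bf(5)])
      moreover have "real (card {e\<in>Ax w \<union> Ay w. fst (h e) \<and> snd (h e)}) \<le> 2 * a0"
      proof -
        have "{e\<in>Ax w \<union> Ay w. fst (h e) \<and> snd (h e)} =
            {e\<in>Ax w. fst (h e) \<and> snd (h e)} \<union> {e\<in>Ay w. fst (h e) \<and> snd (h e)}" by auto
        moreover have "card ({e\<in>Ax w. fst (h e) \<and> snd (h e)} \<union> {e\<in>Ay w. fst (h e) \<and> snd (h e)}) =
            card {e\<in>Ax w. fst (h e) \<and> snd (h e)} + card {e\<in>Ay w. fst (h e) \<and> snd (h e)}"
        proof (rule card_Un_disjoint)
          show "finite {e\<in>Ax w. fst (h e) \<and> snd (h e)}"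
            by (rule finite_subset[OF _ fPar[of "hd w"]]) (auto simp: Ax_def)
          show "finite {e\<in>Ay w. fst (h e) \<and> snd (h e)}"
            by (rule finite_subset[OF _ fPar[of "last w"]]) (auto simp: Ay_def)
        qed (auto simp: Ax_def Ay_def Par_def)
        moreover have "real (card {e\<in>Ax w. fst (h e) \<and> snd (h e)}) \<le> a0"
          unfolding a0_def by (rule vlow_count[OF fE _ ]) (use x w in \<open>auto simp: Ax_def Par_def\<close>)
        moreover have "real (card {e\<in>Ay w. fst (h e) \<and> snd (h e)}) \<le> a0"
          unfolding a0_def by (rule vlow_count[OF fE _ ]) (use y w in \<open>auto simp: Ay_def Par_def\<close>)
        ultimately show ?thesis by simp
      qed
      ultimately show ?thesis by (simp add: B_def G2_def)
    qed
    then show "h \<in> (\<Union>j\<in>{1..5}. \<Union>w\<in>Wd j. B w)" using wW j by blast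
  qed
  have "measure_pmf.prob Q {h. \<exists>x\<in>Vlow X Y E S T n k {e\<in>E. fst (h e) \<and> snd (h e)}.
          \<exists>y\<in>Vlow X Y E S T n k {e\<in>E. fst (h e) \<and> snd (h e)}.
            x \<noteq> y \<and> \<not> 6 \<le> gdist {e\<in>E. fst (h e)} x y}
      \<le> measure_pmf.prob Q (\<Union>j\<in>{1..5}. \<Union>w\<in>Wd j. B w)"
    by (rule measure_pmf.finite_measure_mono[OF incl]) simp
  also have "\<dots> \<le> (\<Sum>j\<in>{1..5}. measure_pmf.prob Q (\<Union>w\<in>Wd j. B w))"
    by (rule measure_pmf.finite_measure_subadditive_finite) auto
  also have "\<dots> \<le> (\<Sum>j\<in>{1..5}. \<Sum>w\<in>Wd j. measure_pmf.prob Q (B w))"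
    by (intro sum_mono measure_pmf.finite_measure_subadditive_finite finWd) auto
  also have "\<dots> \<le> (\<Sum>j\<in>{1..5}. \<Sum>w\<in>Wd j. \<gamma> j)"
    by (intro sum_mono probB) auto
  also have "\<dots> = (\<Sum>j\<in>{1..5}. real (card (Wd j)) * \<gamma> j)" by simp
  also have "\<dots> \<le> (\<Sum>j\<in>{1..5::nat}. 2 * real n * real k ^ j * \<gamma> j)"
    by (intro sum_mono mult_right_mono cardWd) (use q in \<open>auto simp: \<gamma>_def\<close>)
  finally show ?thesis by (simp add: Q_def \<gamma>_def)
qed


definition T1 :: "real \<Rightarrow> real" where
  "T1 x = 2 * x * x powr (8/1000) *
   exp (-(999/1000) * (ln x - ln (ln (ln (ln x)))) * (1 - x powr (-1/20))) / x powr (1/100)"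

definition T2 :: "real \<Rightarrow> real" where
  "T2 x = 2 * x * (\<Sum>j\<in>{1..5::nat}. (ln x + ln (ln (ln (ln x)))) ^ j) * x powr (16/1000) *
   exp (-2 * (999/1000) * (ln x - ln (ln (ln (ln x)))) * (1 - x powr (-1/20) - 4 * ln x powr (1/3) / x))"

lemma asymp_facts:
  "eventually (\<lambda>x::real. T1 x \<le> x powr (-1/10000) / 2 \<and> T2 x \<le> x powr (-1/10000) / 2
     \<and> 1 < x \<and> 0 \<le> ln (ln (ln (ln x))) \<and> ln (ln (ln (ln x))) < ln x
     \<and> ln x + ln (ln (ln (ln x))) \<le> x / ln x powr (1/3)) at_top"
proof -
  have 1: "eventually (\<lambda>x::real. T1 x \<le> x powr (-1/10000) / 2) at_top"
    unfolding T1_def by real_asymp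
  have 2: "eventually (\<lambda>x::real. T2 x \<le> x powr (-1/10000) / 2) at_top"
    unfolding T2_def by (simp add: numeral_eq_Suc) real_asymp
  have 3: "eventually (\<lambda>x::real. 1 < x) at_top" by real_asymp
  have 4: "eventually (\<lambda>x::real. 0 \<le> ln (ln (ln (ln x)))) at_top" by real_asymp
  have 5: "eventually (\<lambda>x::real. ln (ln (ln (ln x))) < ln x) at_top" by real_asymp
  have 6: "eventually (\<lambda>x::real. ln x + ln (ln (ln (ln x))) \<le> x / ln x powr (1/3)) at_top" by real_asymp
  show ?thesis using 1 2 3 4 5 6 by eventually_elim auto
qed


lemma fixed_n:
  fixes X Y S T :: "'a set" and E :: "('a \<times> 'a) set" and n k :: nat
  assumes bip: "bip_regular X Y E n k"
    and n1: "1 < real n"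
    and l0: "0 \<le> ln (ln (ln (ln (real n))))"
    and lL: "ln (ln (ln (ln (real n)))) < ln (real n)"
    and Ll: "ln (real n) + ln (ln (ln (ln (real n)))) \<le> real n / ln (real n) powr (1/3)"
    and kb: "real n / ln (real n) powr (1/3) \<le> real k"
  shows "measure_pmf.prob (random_graphs (X \<union> Y) E (p1 n k) (p2 n k))
       {(G1, G2, GH). \<not> (
          real (card (Vlow X Y E S T n k G1)) \<le> real n powr 0.01
        \<and> (\<forall>x \<in> Vlow X Y E S T n k G1.
             \<forall>y \<in> Vlow X Y E S T n k G1.
               x \<noteq> y \<longrightarrow> gdist GH x y \<ge> 6))}
     \<le> T1 (real n) + T2 (real n)"
proof -
  note bf = bip_facts[OF bip]
  define L where "L = ln (real n)"
  define l where "l = ln (ln (ln (ln (real n))))"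
  define q1 where "q1 = p1 n k"
  define q2 where "q2 = p2 n k"
  define \<delta> where "\<delta> = real n powr (-1/20)"
  define Q where "Q = Qd E q2 (q1/q2)"
  have L0: "0 < L" using n1 by (simp add: L_def)
  have L3: "0 < L powr (1/3)" using L0 by simp
  have npos: "0 < real n" using n1 by simp
  have kpos: "0 < real k" using kb L3 npos unfolding L_def by (smt (verit) divide_pos_pos)
  have q1d: "q1 = (L - l) / real k" by (simp add: q1_def p1_def L_def l_def)
  have q2d: "q2 = (L + l) / real k" by (simp add: q2_def p2_def L_def l_def)
  have q: "0 \<le> q1" "q1 \<le> q2" "0 < q2" "q2 \<le> 1"
  proof -
    show "0 \<le> q1" unfolding q1d using lL kpos by (simp add: L_def l_def)
    show "q1 \<le> q2" unfolding q1d q2d using l0 kpos by (intro divide_right_mono) (auto simp: l_def)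
    show "0 < q2" unfolding q2d using l0 L0 kpos by (simp add: l_def)
    have "L + l \<le> real k" using Ll kb by (simp add: L_def l_def)
    then show "q2 \<le> 1" unfolding q2d using kpos by simp
  qed
  let ?Vl = "\<lambda>h. Vlow X Y E S T n k {e\<in>E. fst (h e) \<and> snd (h e)}"
  have "measure_pmf.prob (random_graphs (X \<union> Y) E q1 q2)
       {(G1, G2, GH). \<not> (
          real (card (Vlow X Y E S T n k G1)) \<le> real n powr 0.01
        \<and> (\<forall>x \<in> Vlow X Y E S T n k G1.
             \<forall>y \<in> Vlow X Y E S T n k G1.
               x \<noteq> y \<longrightarrow> gdist GH x y \<ge> 6))}
     \<le> measure_pmf.prob Q {h. \<not> (real (card (?Vl h)) \<le> real n powr 0.01 \<and>
         (\<forall>x\<in>?Vl h. \<forall>y\<in>?Vl h. x \<noteq> y \<longrightarrow> gdist {e\<in>E. fst (h e)} x y \<ge> 6))}"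
    unfolding Q_def
    apply (rule reduce)
    using bf by auto
  also have "\<dots> \<le> measure_pmf.prob Q
      ({h. \<not> real (card (?Vl h)) \<le> real n powr 0.01} \<union>
       {h. \<exists>x\<in>?Vl h. \<exists>y\<in>?Vl h. x \<noteq> y \<and> \<not> 6 \<le> gdist {e\<in>E. fst (h e)} x y})"
    by (rule measure_pmf.finite_measure_mono) auto
  also have "\<dots> \<le> measure_pmf.prob Q {h. \<not> real (card (?Vl h)) \<le> real n powr 0.01} +
      measure_pmf.prob Q {h. \<exists>x\<in>?Vl h. \<exists>y\<in>?Vl h. x \<noteq> y \<and> \<not> 6 \<le> gdist {e\<in>E. fst (h e)} x y}"
    by (rule measure_Un_le) auto
  also have "\<dots> \<le> T1 (real n) + T2 (real n)"
  proof (rule add_mono)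
    have "measure_pmf.prob Q {h. \<not> real (card (?Vl h)) \<le> real n powr 0.01}
      \<le> 2 * real n * (real n powr (8/1000) * exp (-(999/1000) * q1 * (real k - real n powr (-1/20) * real k)))
       / real n powr 0.01"
      unfolding Q_def by (rule part1[OF bip _ q]) (use npos in simp)
    also have "\<dots> = T1 (real n)"
    proof -
      have eq: "-(999/1000) * q1 * (real k - real n powr (-1/20) * real k) =
          -(999/1000) * (L - l) * (1 - real n powr (-1/20))"
        unfolding q1d using kpos by (simp add: field_simps)
      show ?thesis unfolding eq T1_def L_def l_def by (simp add: mult.assoc)
    qed
    finally show "measure_pmf.prob Q {h. \<not> real (card (?Vl h)) \<le> real n powr 0.01} \<le> T1 (real n)" .
  next
    have "measure_pmf.prob Q {h. \<exists>x\<in>?Vl h. \<exists>y\<in>?Vl h. x \<noteq> y \<and> \<not> 6 \<le> gdist {e\<in>E. fst (h e)} x y}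
      \<le> (\<Sum>j\<in>{1..5}. 2 * real n * real k ^ j * (real n powr (16/1000) * q2 ^ j *
          exp (-(999/1000) * q1 * (2 * (real k - real n powr (-1/20) * real k - 4)))))"
      unfolding Q_def by (rule part2[OF bip _ q]) (use npos in simp)
    also have "\<dots> \<le> (\<Sum>j\<in>{1..5::nat}. 2 * real n * (L + l) ^ j * (real n powr (16/1000) *
          exp (-2 * (999/1000) * (L - l) * (1 - real n powr (-1/20) - 4 * L powr (1/3) / real n))))"
    proof (rule sum_mono)
      fix j :: nat
      have kq: "real k ^ j * q2 ^ j = (L + l) ^ j"
        unfolding q2d using kpos by (simp add: power_mult_distrib[symmetric])
      have "(L - l) * (1 - \<delta> - 4 * L powr (1/3) / real n) \<le> q1 * (real k - \<delta> * real k - 4)"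
      proof -
        have ik: "1 / real k \<le> L powr (1/3) / real n"
          using kb kpos npos L3 unfolding L_def by (simp add: field_simps)
        have "(L - l) * (4 * (1 / real k)) \<le> (L - l) * (4 * (L powr (1/3) / real n))"
          using ik lL by (intro mult_left_mono) (auto simp: L_def l_def)
        moreover have "q1 * (real k - \<delta> * real k - 4) = (L - l) * (1 - \<delta>) - (L - l) * (4 * (1 / real k))"
          unfolding q1d using kpos by (simp add: field_simps)
        ultimately show ?thesis by (simp add: algebra_simps)
      qed
      then have "exp (-(999/1000) * q1 * (2 * (real k - \<delta> * real k - 4))) \<le>
          exp (-2 * (999/1000) * (L - l) * (1 - \<delta> - 4 * L powr (1/3) / real n))"
      proof -
        assume H: "(L - l) * (1 - \<delta> - 4 * L powr (1/3) / real n) \<le> q1 * (real k - \<delta> * real k - 4)"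
        have a: "-(999/1000) * q1 * (2 * (real k - \<delta> * real k - 4)) = -(1998/1000) * (q1 * (real k - \<delta> * real k - 4))"
          using npos by (simp add: field_simps)
        have b: "-2 * (999/1000) * (L - l) * (1 - \<delta> - 4 * L powr (1/3) / real n) =
            -(1998/1000) * ((L - l) * (1 - \<delta> - 4 * L powr (1/3) / real n))"
          using npos by (simp add: field_simps)
        show ?thesis unfolding a b exp_le_cancel_iff using H by linarith
      qed
      then have "2 * real n * real k ^ j * (real n powr (16/1000) * q2 ^ j *
          exp (-(999/1000) * q1 * (2 * (real k - \<delta> * real k - 4)))) \<le>
          2 * real n * (real k ^ j * q2 ^ j) * (real n powr (16/1000) *
          exp (-2 * (999/1000) * (L - l) * (1 - \<delta> - 4 * L powr (1/3) / real n)))"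
        using npos q kpos by (simp add: mult_left_mono mult.assoc mult.left_commute)
      then show "2 * real n * real k ^ j * (real n powr (16/1000) * q2 ^ j *
          exp (-(999/1000) * q1 * (2 * (real k - real n powr (-1/20) * real k - 4)))) \<le>
          2 * real n * (L + l) ^ j * (real n powr (16/1000) *
          exp (-2 * (999/1000) * (L - l) * (1 - real n powr (-1/20) - 4 * L powr (1/3) / real n)))"
        unfolding kq \<delta>_def .
    qed
    also have "\<dots> = T2 (real n)"
      unfolding T2_def L_def l_def by (simp add: sum_distrib_left sum_distrib_right mult_ac)
    finally show "measure_pmf.prob Q {h. \<exists>x\<in>?Vl h. \<exists>y\<in>?Vl h. x \<noteq> y \<and> \<not> 6 \<le> gdist {e\<in>E. fst (h e)} x y}
        \<le> T2 (real n)" .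
  qed
  finally show ?thesis by (simp add: q1_def q2_def)
qed


theorem lemma3p5:
  fixes X Y S T :: "nat \<Rightarrow> 'a set" and E :: "nat \<Rightarrow> ('a \<times> 'a) set" and k :: "nat \<Rightarrow> nat"
  assumes delta: "filterlim (\<lambda>n. real (k n) / real n * ln (real n) powr (1/3)) at_top sequentially"
    and graphs: "eventually (\<lambda>n. bip_regular (X n) (Y n) (E n) n (k n) \<and> is_cut (X n) (Y n) (S n) (T n))
                   sequentially"
  shows "\<exists>c>0. eventually (\<lambda>n.
     measure_pmf.prob (random_graphs (X n \<union> Y n) (E n) (p1 n (k n)) (p2 n (k n)))
       {(G1, G2, GH). \<not> (
          real (card (Vlow (X n) (Y n) (E n) (S n) (T n) n (k n) G1)) \<le> real n powr 0.01
        \<and> (\<forall>x \<in> Vlow (X n) (Y n) (E n) (S n) (T n) n (k n) G1.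
             \<forall>y \<in> Vlow (X n) (Y n) (E n) (S n) (T n) n (k n) G1.
               x \<noteq> y \<longrightarrow> gdist GH x y \<ge> 6))}
     \<le> real n powr (- c)) sequentially"
proof (intro exI[of _ "1/10000"] conjI)
  show "(0::real) < 1/10000" by simp
  have A: "eventually (\<lambda>n. T1 (real n) \<le> real n powr (-1/10000) / 2 \<and> T2 (real n) \<le> real n powr (-1/10000) / 2
     \<and> 1 < real n \<and> 0 \<le> ln (ln (ln (ln (real n)))) \<and> ln (ln (ln (ln (real n)))) < ln (real n)
     \<and> ln (real n) + ln (ln (ln (ln (real n)))) \<le> real n / ln (real n) powr (1/3)) sequentially"
    using filterlim_real_sequentially asymp_facts unfolding filterlim_iff by blast
  have D: "eventually (\<lambda>n. 1 \<le> real (k n) / real n * ln (real n) powr (1/3)) sequentially"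
    using delta unfolding filterlim_at_top by blast
  show "eventually (\<lambda>n.
     measure_pmf.prob (random_graphs (X n \<union> Y n) (E n) (p1 n (k n)) (p2 n (k n)))
       {(G1, G2, GH). \<not> (
          real (card (Vlow (X n) (Y n) (E n) (S n) (T n) n (k n) G1)) \<le> real n powr 0.01
        \<and> (\<forall>x \<in> Vlow (X n) (Y n) (E n) (S n) (T n) n (k n) G1.
             \<forall>y \<in> Vlow (X n) (Y n) (E n) (S n) (T n) n (k n) G1.
               x \<noteq> y \<longrightarrow> gdist GH x y \<ge> 6))}
     \<le> real n powr (- (1/10000))) sequentially"
    using A D graphs
  proof eventually_elim
    case (elim n)
    have L3: "0 < ln (real n) powr (1/3)" using elim by simp
    have np: "0 < real n" using elim by simp
    have kb: "real n / ln (real n) powr (1/3) \<le> real (k n)"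
    proof -
      have "real n * 1 \<le> real n * (real (k n) / real n * ln (real n) powr (1/3))"
        using elim np by (intro mult_left_mono) auto
      then have "real n \<le> real (k n) * ln (real n) powr (1/3)" using np by simp
      then show ?thesis using L3 by (simp add: divide_le_eq)
    qed
    have "measure_pmf.prob (random_graphs (X n \<union> Y n) (E n) (p1 n (k n)) (p2 n (k n)))
       {(G1, G2, GH). \<not> (
          real (card (Vlow (X n) (Y n) (E n) (S n) (T n) n (k n) G1)) \<le> real n powr 0.01
        \<and> (\<forall>x \<in> Vlow (X n) (Y n) (E n) (S n) (T n) n (k n) G1.
             \<forall>y \<in> Vlow (X n) (Y n) (E n) (S n) (T n) n (k n) G1.
               x \<noteq> y \<longrightarrow> gdist GH x y \<ge> 6))} \<le> T1 (real n) + T2 (real n)"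
      by (rule fixed_n) (use elim kb in auto)
    also have "\<dots> \<le> real n powr (- (1/10000))" using elim by simp
    finally show ?case .
  qed
qed


end
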